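(* Suppose A1–A3 hold and that $\sum_{k=0}^{\infty}\nu_k<+\infty$. Let $\{x_k\}$ be generated by Algorithm 1 and let $\epsilon\in(0,1)$. If $T$ is a positive integer with $$T\ge 2\max\left\{\sum_{k=0}^{\infty}\nu_k,\ f(x_0)-f_{low}\right\}\kappa_c^{-1}\epsilon^{-2},$$ then $\min_{k=0,\dots,T-1}\|\nabla f(x_k)\|\le\epsilon$.
   Context: Let $(X,\langle\cdot,\cdot\rangle)$ be a real Hilbert space with induced norm $\|\cdot\|$, and $f:X\to\mathbb{R}$ Fréchet differentiable with gradient $\nabla f$. Algorithm 1 (general non-monotone descent algorithm): parameters $x_0\in X$, $\alpha_0>0$, $\beta,\rho\in(0,1)$. For $k=0,1,2,\dots$: choose $d_k\in X$ with $\langle\nabla f(x_k),d_k\rangle<0$; then for $l=0,1,2,\dots$ choose a number $\nu_{k,l}\ge 0$ and test $$f(x_k+\alpha_k\beta^l d_k)\le f(x_k)+\rho\alpha_k\beta^l\langle\nabla f(x_k),d_k\rangle+\nu_{k,l};$$ let $l_k$ be the first $l$ for which this holds, set $\nu_k:=\nu_{k,l_k}$, $x_{k+1}=x_k+\alpha_k\beta^{l_k}d_k$ and $\alpha_{k+1}=\alpha_k\beta^{l_k-1}$. It is assumed the algorithm generates infinite sequences (all $l_k$ finite). Assumptions: A1: $\nabla f$ is Lipschitz continuous with constant $L>0$. A2: there is $f_{low}\in\mathbb{R}$ with $f(x)\ge f_{low}$ for all $x\in X$. A3: there are constants $c_1,c_2>0$ with $\langle\nabla f(x_k),d_k\rangle\le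 -c_1\|\nabla f(x_k)\|^2$ and $\|d_k\|\le c_2\|\nabla f(x_k)\|$ for all $k$. Constant: $\kappa_c=\min\left\{\rho\beta\alpha_0c_1,\ \frac{2\beta\rho(1-\rho)c_1^2}{Lc_2^2}\right\}$. *)

theory Defs
  imports "HOL-Analysis.Analysis"
begin

text \<open>The run is described by
  the iterates x, the directions d, the step parameters alpha, the trial numbers
  nu k l (the number \<open>\<nu>_{k,l}\<close>) and the accepted indices lk k (the number \<open>l_k\<close>).
  The gradient of f is g.  \<open>\<nu>_k = nu k (lk k)\<close>.\<close>

definition armijo_test :: "('a::real_inner \<Rightarrow> real) \<Rightarrow> ('a \<Rightarrow> 'a) \<Rightarrow> real \<Rightarrow> real
    \<Rightarrow> 'a \<Rightarrow> 'a \<Rightarrow> real \<Rightarrow> nat \<Rightarrow> real \<Rightarrow> bool" where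
  "armijo_test f g \<beta> \<rho> xk dk ak l nukl \<longleftrightarrow>
     f (xk + (ak * \<beta> ^ l) *\<^sub>R dk) \<le> f xk + \<rho> * ak * \<beta> ^ l * inner (g xk) dk + nukl"

definition algorithm1 ::
  "('a::real_inner \<Rightarrow> real) \<Rightarrow> ('a \<Rightarrow> 'a) \<Rightarrow> 'a \<Rightarrow> real \<Rightarrow> real \<Rightarrow> real
   \<Rightarrow> (nat \<Rightarrow> 'a) \<Rightarrow> (nat \<Rightarrow> 'a) \<Rightarrow> (nat \<Rightarrow> real) \<Rightarrow> (nat \<Rightarrow> nat \<Rightarrow> real) \<Rightarrow> (nat \<Rightarrow> nat) \<Rightarrow> bool" where
  "algorithm1 f g x0 \<alpha>0 \<beta> \<rho> x d \<alpha> nu lk \<longleftrightarrow>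
     \<alpha>0 > 0 \<and> 0 < \<beta> \<and> \<beta> < 1 \<and> 0 < \<rho> \<and> \<rho> < 1 \<and>
     x 0 = x0 \<and> \<alpha> 0 = \<alpha>0 \<and>
     (\<forall>k. inner (g (x k)) (d k) < 0) \<and>
     (\<forall>k l. nu k l \<ge> 0) \<and>
     (\<forall>k. armijo_test f g \<beta> \<rho> (x k) (d k) (\<alpha> k) (lk k) (nu k (lk k))) \<and>
     (\<forall>k l. l < lk k \<longrightarrow> \<not> armijo_test f g \<beta> \<rho> (x k) (d k) (\<alpha> k) l (nu k l)) \<and>
     (\<forall>k. x (Suc k) = x k + (\<alpha> k * \<beta> ^ lk k) *\<^sub>R d k) \<and>
     (\<forall>k. \<alpha> (Suc k) = \<alpha> k * \<beta> powi (int (lk k) - 1))"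

definition kappa_c :: "real \<Rightarrow> real \<Rightarrow> real \<Rightarrow> real \<Rightarrow> real \<Rightarrow> real \<Rightarrow> real" where
  "kappa_c \<alpha>0 \<beta> \<rho> L c1 c2 =
     min (\<rho> * \<beta> * \<alpha>0 * c1) (2 * \<beta> * \<rho> * (1 - \<rho>) * c1^2 / (L * c2^2))"

end

theory Submission
  imports Defs
begin

lemma descent_lemma:
  fixes f :: "'a::real_inner \<Rightarrow> real" and g :: "'a \<Rightarrow> 'a"
  assumes grad: "\<And>y. (f has_derivative (\<lambda>h. inner (g y) h)) (at y)"
    and lip: "\<And>y z. norm (g y - g z) \<le> L * norm (y - z)"
    and s: "s \<ge> 0"
  shows "f (y + s *\<^sub>R d) \<le> f y + s * inner (g y) d + L / 2 * s^2 * (norm d)^2"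
proof -
  define h where "h t = f (y + t *\<^sub>R d) - t * inner (g y) d - L / 2 * t^2 * (norm d)^2" for t
  have D: "(h has_real_derivative (inner (g (y + t *\<^sub>R d)) d - inner (g y) d - L * t * (norm d)^2)) (at t)" for t
  proof -
    have d1: "((\<lambda>t. y + t *\<^sub>R d) has_derivative (\<lambda>h. h *\<^sub>R d)) (at t)"
      by (auto intro!: derivative_eq_intros)
    have "((\<lambda>t. f (y + t *\<^sub>R d)) has_derivative (\<lambda>h. inner (g (y + t *\<^sub>R d)) (h *\<^sub>R d))) (at t)"
      using has_derivative_compose[OF d1 grad] by simp
    hence "((\<lambda>t. f (y + t *\<^sub>R d)) has_real_derivative inner (g (y + t *\<^sub>R d)) d) (at t)"
      unfolding has_field_derivative_def by (simp add: mult.commute[of _ "inner _ d"])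
    then show ?thesis unfolding h_def
      by (auto intro!: derivative_eq_intros)
  qed
  have "h s \<le> h 0"
  proof (rule DERIV_nonpos_imp_nonincreasing[OF s])
    fix t assume t0: "0 \<le> t" and ts: "t \<le> s"
    have t: "0 \<le> t" by (rule t0)
    have "inner (g (y + t *\<^sub>R d)) d - inner (g y) d = inner (g (y + t *\<^sub>R d) - g y) d"
      by (simp add: inner_diff_left)
    also have "\<dots> \<le> norm (g (y + t *\<^sub>R d) - g y) * norm d" by (rule norm_cauchy_schwarz)
    also have "\<dots> \<le> L * norm (t *\<^sub>R d) * norm d"
      using lip[of "y + t *\<^sub>R d" y] by (simp add: mult_right_mono)
    also have "\<dots> = L * t * (norm d)^2" using t by (simp add: power2_eq_square)
    finally show "\<exists>y. (h has_real_derivative y) (at t) \<and> y \<le> 0"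
      using D by (intro exI[of _ "inner (g (y + t *\<^sub>R d)) d - inner (g y) d - L * t * (norm d)^2"]) auto
  qed
  thus ?thesis unfolding h_def by simp
qed

theorem corollary1:
  fixes f :: "'a::{real_inner, complete_space} \<Rightarrow> real" and g :: "'a \<Rightarrow> 'a"
    and x d :: "nat \<Rightarrow> 'a" and \<alpha> :: "nat \<Rightarrow> real" and nu :: "nat \<Rightarrow> nat \<Rightarrow> real"
    and lk :: "nat \<Rightarrow> nat" and x0 :: 'a
    and \<alpha>0 \<beta> \<rho> L f_low c1 c2 \<epsilon> :: real and T :: nat
  assumes grad: "\<And>y. (f has_derivative (\<lambda>h. inner (g y) h)) (at y)"
    and alg: "algorithm1 f g x0 \<alpha>0 \<beta> \<rho> x d \<alpha> nu lk"
    and A1: "L > 0" "\<And>y z. norm (g y - g z) \<le> L * norm (y - z)"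
    and A2: "\<And>y. f y \<ge> f_low"
    and A3: "c1 > 0" "c2 > 0"
      "\<And>k. inner (g (x k)) (d k) \<le> - c1 * (norm (g (x k)))^2"
      "\<And>k. norm (d k) \<le> c2 * norm (g (x k))"
    and nu_sum: "summable (\<lambda>k. nu k (lk k))"
    and eps: "0 < \<epsilon>" "\<epsilon> < 1"
    and T: "T > 0"
      "real T \<ge> 2 * max (\<Sum>k. nu k (lk k)) (f x0 - f_low)
                  * inverse (kappa_c \<alpha>0 \<beta> \<rho> L c1 c2) * inverse (\<epsilon>^2)"
  shows "(MIN k\<in>{..<T}. norm (g (x k))) \<le> \<epsilon>"
proof -
  note a = alg[unfolded algorithm1_def]
  have a0: "\<alpha>0 > 0" and b0: "0 < \<beta>" and b1: "\<beta> < 1" and r0: "0 < \<rho>" and r1: "\<rho> < 1"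
    and x0d: "x 0 = x0" and al0: "\<alpha> 0 = \<alpha>0" and desc: "\<And>k. inner (g (x k)) (d k) < 0"
    and nuge: "\<And>k l. nu k l \<ge> 0"
    and acc: "\<And>k. armijo_test f g \<beta> \<rho> (x k) (d k) (\<alpha> k) (lk k) (nu k (lk k))"
    and rej: "\<And>k l. l < lk k \<Longrightarrow> \<not> armijo_test f g \<beta> \<rho> (x k) (d k) (\<alpha> k) l (nu k l)"
    and xs: "\<And>k. x (Suc k) = x k + (\<alpha> k * \<beta> ^ lk k) *\<^sub>R d k"
    and als: "\<And>k. \<alpha> (Suc k) = \<alpha> k * \<beta> powi (int (lk k) - 1)"
    using a by auto
  define B where "B = 2 * (1 - \<rho>) * c1 / (L * c2^2)"
  define m where "m = min (\<beta> * \<alpha>0) (\<beta> * B)"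
  define t where "t k = \<alpha> k * \<beta> ^ lk k" for k
  have alsu: "\<alpha> (Suc k) = t k / \<beta>" for k
  proof -
    have "\<beta> powi (int (lk k) - 1) = \<beta> powi (int (lk k)) / \<beta> powi 1"
      using b0 by (intro power_int_diff) auto
    thus ?thesis using als[of k] unfolding t_def by (simp add: power_int_of_nat)
  qed
  have apos: "\<alpha> k > 0" for k
  proof (induction k)
    case 0 then show ?case using al0 a0 by simp
  next
    case (Suc k) then show ?case using alsu[of k] b0 unfolding t_def by simp
  qed
  have Bpos: "B > 0" unfolding B_def using r1 A3 A1 by simp
  have gnz: "norm (g (x k)) > 0" for k
    using desc[of k] by (cases "g (x k) = 0") auto
  have tB: "t k \<ge> \<beta> * B" if "lk k \<ge> 1" for k
  proof -
    define l where "l = lk k - 1"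
    define s where "s = \<alpha> k * \<beta> ^ l"
    have tk: "t k = \<beta> * s" unfolding t_def s_def l_def using that
      by (metis mult.left_commute power_Suc Suc_diff_1 less_le_trans zero_less_one)
    have spos: "s > 0" unfolding s_def using apos b0 by simp
    have "l < lk k" using that unfolding l_def by simp
    from rej[OF this] have "f (x k + s *\<^sub>R d k) > f (x k) + \<rho> * s * inner (g (x k)) (d k) + nu k l"
      unfolding armijo_test_def s_def by (simp add: mult.assoc)
    hence f1: "f (x k + s *\<^sub>R d k) > f (x k) + \<rho> * s * inner (g (x k)) (d k)" using nuge[of k l] by linarith
    have f2: "f (x k + s *\<^sub>R d k) \<le> f (x k) + s * inner (g (x k)) (d k) + L / 2 * s^2 * (norm (d k))^2"
      using descent_lemma[OF grad A1(2), of s] spos by simp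
    define G where "G = norm (g (x k))"
    define I where "I = inner (g (x k)) (d k)"
    have "(1 - \<rho>) * s * (- I) < L / 2 * s^2 * (norm (d k))^2"
      using f1 f2 unfolding I_def by (simp add: algebra_simps)
    moreover have e1: "L / 2 * s^2 * (norm (d k))^2 = s * (L / 2 * s * (norm (d k))^2)"
      by (simp add: power2_eq_square)
    moreover have e2: "(1 - \<rho>) * s * (- I) = s * ((1 - \<rho>) * (- I))" by simp
    ultimately have "s * ((1 - \<rho>) * (- I)) < s * (L / 2 * s * (norm (d k))^2)" by argo
    hence "(1 - \<rho>) * (- I) < L / 2 * s * (norm (d k))^2"
      using spos mult_less_cancel_left_pos by blast
    moreover have "(1 - \<rho>) * (c1 * G^2) \<le> (1 - \<rho>) * (- I)"
      using A3(3)[of k] r1 unfolding I_def G_def by (intro mult_left_mono) auto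
    moreover have "(norm (d k))^2 \<le> (c2 * G)^2"
      using A3(4)[of k] unfolding G_def by (intro power_mono) auto
    hence "L / 2 * s * (norm (d k))^2 \<le> L / 2 * s * (c2 * G)^2"
      using A1(1) spos by (intro mult_left_mono) auto
    ultimately have "(1 - \<rho>) * c1 * G^2 < (L / 2 * s * c2^2) * G^2"
      by (simp add: power_mult_distrib algebra_simps)
    hence "(1 - \<rho>) * c1 < L / 2 * s * c2^2"
      using gnz[of k] unfolding G_def by (simp add: mult_less_cancel_right)
    hence "B < s" unfolding B_def using A1(1) A3(2)
      by (simp add: field_simps)
    thus ?thesis using tk b0 by simp
  qed
  have alm: "\<alpha> k \<ge> m" for k
  proof (induction k)
    case 0
    have "\<beta> * \<alpha>0 \<le> 1 * \<alpha>0" using b1 a0 by (intro mult_right_mono) auto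
    then show ?case using al0 unfolding m_def by simp
  next
    case (Suc k)
    have "t k \<ge> m"
    proof (cases "lk k = 0")
      case True then show ?thesis using Suc unfolding t_def by simp
    next
      case False then show ?thesis using tB[of k] unfolding m_def by simp
    qed
    moreover have "t k \<le> t k / \<beta>"
      using b0 b1 apos[of k] unfolding t_def by (simp add: field_simps)
    ultimately show ?case using alsu[of k] by simp
  qed
  have tm: "t k \<ge> m" for k
  proof (cases "lk k = 0")
    case True then show ?thesis using alm[of k] unfolding t_def by simp
  next
    case False then show ?thesis using tB[of k] unfolding m_def by simp
  qed
  define \<kappa> where "\<kappa> = kappa_c \<alpha>0 \<beta> \<rho> L c1 c2"
  have kap: "\<kappa> = \<rho> * c1 * m"
  proof -
    have "\<rho> * c1 * m = min (\<rho> * c1 * (\<beta> * \<alpha>0)) (\<rho> * c1 * (\<beta> * B))"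
      unfolding m_def using r0 A3(1) by (simp add: min_mult_distrib_left)
    also have "\<dots> = \<kappa>" unfolding \<kappa>_def kappa_c_def B_def by (simp add: field_simps power2_eq_square)
    finally show ?thesis by simp
  qed
  have mpos: "m > 0" unfolding m_def using b0 a0 Bpos by simp
  have kpos: "\<kappa> > 0" using kap r0 A3(1) mpos by simp
  have step: "f (x (Suc k)) \<le> f (x k) - \<kappa> * (norm (g (x k)))^2 + nu k (lk k)" for k
  proof -
    have "f (x (Suc k)) \<le> f (x k) + \<rho> * t k * inner (g (x k)) (d k) + nu k (lk k)"
      using acc[of k] unfolding armijo_test_def xs t_def by (simp add: mult.assoc)
    also have "\<rho> * t k * inner (g (x k)) (d k) \<le> \<rho> * t k * (- c1 * (norm (g (x k)))^2)"
      using A3(3)[of k] r0 mpos tm[of k] by (intro mult_left_mono) auto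
    also have "\<dots> = - (\<rho> * c1 * t k) * (norm (g (x k)))^2" by simp
    also have "\<dots> \<le> - \<kappa> * (norm (g (x k)))^2"
      unfolding kap using tm[of k] r0 A3(1) by (intro mult_right_mono) auto
    finally show ?thesis by simp
  qed
  have tel: "\<kappa> * (\<Sum>k<n. (norm (g (x k)))^2) \<le> f x0 - f (x n) + (\<Sum>k<n. nu k (lk k))" for n
  proof (induction n)
    case 0 then show ?case using x0d by simp
  next
    case (Suc n) then show ?case using step[of n] by (simp add: algebra_simps)
  qed
  define M where "M = max (\<Sum>k. nu k (lk k)) (f x0 - f_low)"
  have sumle: "(\<Sum>k<T. nu k (lk k)) \<le> (\<Sum>k. nu k (lk k))"
    using nu_sum nuge by (intro sum_le_suminf) auto
  have main: "\<kappa> * (\<Sum>k<T. (norm (g (x k)))^2) \<le> 2 * M"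
    using tel[of T] sumle A2[of "x T"] max.cobounded1[of "\<Sum>k. nu k (lk k)" "f x0 - f_low"]
      max.cobounded2[of "f x0 - f_low" "\<Sum>k. nu k (lk k)"] unfolding M_def by argo
  show ?thesis
  proof (rule ccontr)
    assume "\<not> ?thesis"
    hence gt: "\<epsilon> < (MIN k\<in>{..<T}. norm (g (x k)))" by simp
    have ne: "{..<T} \<noteq> {}" using T(1) by auto
    have "\<forall>k\<in>{..<T}. \<epsilon> < norm (g (x k))" using gt Min_gr_iff[of "(\<lambda>k. norm (g (x k))) ` {..<T}"] ne by auto
    hence "(\<Sum>k<T. \<epsilon>^2) < (\<Sum>k<T. (norm (g (x k)))^2)"
      using ne eps(1) by (intro sum_strict_mono) (auto intro: power_strict_mono)
    hence "real T * \<epsilon>^2 < (\<Sum>k<T. (norm (g (x k)))^2)" by simp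
    hence "\<kappa> * (real T * \<epsilon>^2) < 2 * M" using main kpos
      by (meson mult_strict_left_mono less_le_trans)
    moreover have "real T \<ge> 2 * M / (\<kappa> * \<epsilon>^2)"
      using T(2) unfolding M_def \<kappa>_def by (simp add: field_simps)
    hence "\<kappa> * (real T * \<epsilon>^2) \<ge> 2 * M" using kpos eps(1)
      by (simp add: field_simps)
    ultimately show False by simp
  qed
qed

end
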